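(* Let $\alpha\in(0,2)$, $d\in\mathbb{N}$, $r>-\alpha$, $p\in((-r)\vee0,\alpha)$, $V_p(x):=(1+|x|^2)^{p/2}$ and $$q:=\frac{2^{4+2\alpha}\pi^{d/2}\Gamma(\frac{d+\alpha}{2})}{\Gamma(\frac d2)^2\Gamma(\frac{2-\alpha}{2})}\Big(\frac{\alpha}{2-\alpha}+\frac{\alpha}{(\alpha-p)p}\Big).$$ Let $b:\mathbb{R}^d\to\mathbb{R}^d$ and $\sigma:\mathbb{R}^d\to\mathbb{R}^d\otimes\mathbb{R}^d$ be locally bounded, and suppose that for some $c_0,c_1>0$, $$q\|\sigma(x)\|^\alpha|x|^{2-\alpha}+\langle x,b(x)\rangle\leq -c_0|x|^{2+r}+c_1,\qquad |x|>1.$$ Then there are $\kappa_0,\kappa_1>0$ such that for all $x\in\mathbb{R}^d$, $$\mathscr{L}V_p(x):=\mathcal{L}_\sigma V_p(x)+\langle b(x),\nabla V_p(x)\rangle\leq-\kappa_0V_p(x)^{1+\frac rp}+\kappa_1.$$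
   Context: For suitable $f$, $$\mathcal{L}_\sigma f(x)=\frac{\alpha2^\alpha\Gamma(\frac{d+\alpha}2)}{\Gamma(\frac d2)\Gamma(\frac{2-\alpha}2)}\int_{\mathbb{R}^d}\big[f(x+\sigma(x)z)+f(x-\sigma(x)z)-2f(x)\big]\frac{\mathrm{d}z}{|z|^{d+\alpha}}.$$ *)

theory Defs
  imports "HOL-Analysis.Analysis"
begin

definition Vp :: "real \<Rightarrow> real ^ 'n \<Rightarrow> real" where
  "Vp p x = (1 + (norm x)\<^sup>2) powr (p / 2)"

definition stable_const :: "real \<Rightarrow> nat \<Rightarrow> real" where
  "stable_const \<alpha> d = \<alpha> * 2 powr \<alpha> * Gamma ((real d + \<alpha>) / 2)
      / (Gamma (real d / 2) * Gamma ((2 - \<alpha>) / 2))"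

definition L_sigma :: "real \<Rightarrow> (real ^ 'n \<Rightarrow> real ^ 'n ^ 'n) \<Rightarrow> (real ^ 'n \<Rightarrow> real)
    \<Rightarrow> real ^ 'n \<Rightarrow> real" where
  "L_sigma \<alpha> \<sigma> f x = stable_const \<alpha> CARD('n) *
     (\<integral>z. (f (x + \<sigma> x *v z) + f (x - \<sigma> x *v z) - 2 * f x) / norm z powr (real CARD('n) + \<alpha>) \<partial>lborel)"

definition gen_L :: "real \<Rightarrow> (real ^ 'n \<Rightarrow> real ^ 'n ^ 'n) \<Rightarrow> (real ^ 'n \<Rightarrow> real ^ 'n)
    \<Rightarrow> (real ^ 'n \<Rightarrow> real) \<Rightarrow> real ^ 'n \<Rightarrow> real" where
  "gen_L \<alpha> \<sigma> b f x = L_sigma \<alpha> \<sigma> f x + frechet_derivative f (at x) (b x)"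

definition locally_bounded :: "('a::real_normed_vector \<Rightarrow> 'b::real_normed_vector) \<Rightarrow> bool" where
  "locally_bounded f \<longleftrightarrow> (\<forall>K. compact K \<longrightarrow> bounded (f ` K))"

definition q_const :: "real \<Rightarrow> nat \<Rightarrow> real \<Rightarrow> real" where
  "q_const \<alpha> d p = 2 powr (4 + 2 * \<alpha>) * pi powr (real d / 2) * Gamma ((real d + \<alpha>) / 2)
      / ((Gamma (real d / 2))\<^sup>2 * Gamma ((2 - \<alpha>) / 2))
      * (\<alpha> / (2 - \<alpha>) + \<alpha> / ((\<alpha> - p) * p))"

end

theory Submission
  imports Defs
begin


lemma dist_norm_eq:
  defines "cV \<equiv> real CARD('n) * unit_ball_vol (real CARD('n))"
  shows "distr (lborel :: (real^'n) measure) borel norm =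
         density lborel (\<lambda>u. ennreal (cV * u powr (real CARD('n) - 1)) * indicator {0..} u)"
proof (rule measure_eqI_generator_eq_countable[where E="range lessThan" and \<Omega>=UNIV and A="range (\<lambda>n::nat. {..<real n})"])
  show "Int_stable (range lessThan :: real set set)"
  proof (clarsimp simp: Int_stable_def)
    fix a b :: real
    have "{..<a} \<inter> {..<b} = {..<min a b}" by auto
    then show "{..<a} \<inter> {..<b} \<in> range lessThan" by blast
  qed
  show "range lessThan \<subseteq> Pow (UNIV::real set)" by auto
  show "sets (distr lborel borel norm) = sigma_sets UNIV (range lessThan :: real set set)"
    by (simp add: borel_Iio)
  show "sets (density lborel (\<lambda>u. ennreal (cV * u powr (real CARD('n) - 1)) * indicator {0..} u)) = sigma_sets UNIV (range lessThan :: real set set)"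
    by (simp add: borel_Iio)
  show "range (\<lambda>n::nat. {..<real n}) \<subseteq> range lessThan" by auto
  show "\<Union> (range (\<lambda>n::nat. {..<real n})) = UNIV"
    by (auto intro: reals_Archimedean2)
  show "countable (range (\<lambda>n::nat. {..<real n}))" by auto
  have dpos: "real CARD('n) \<ge> 1" by (simp add: Suc_le_eq)
  have main: "emeasure (distr (lborel::(real^'n) measure) borel norm) {..<x} = ennreal (if x \<le> 0 then 0 else unit_ball_vol (real CARD('n)) * x ^ CARD('n))"
    for x :: real
  proof -
    have e: "norm -` {..<x} = (ball 0 x :: (real^'n) set)" by (auto simp: ball_def)
    have "emeasure (distr (lborel::(real^'n) measure) borel norm) {..<x} = emeasure (lborel :: (real^'n) measure) (ball 0 x)"
      by (subst emeasure_distr) (auto simp: e)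
    then show ?thesis
      by (cases "x \<le> 0") (auto simp: emeasure_ball ball_empty)
  qed
  show "emeasure (distr (lborel::(real^'n) measure) borel norm) a \<noteq> \<infinity>" if "a \<in> range (\<lambda>n::nat. {..<real n})" for a
    using that by (auto simp: main)
  show "emeasure (distr (lborel::(real^'n) measure) borel norm) X = emeasure (density lborel (\<lambda>u. ennreal (cV * u powr (real CARD('n) - 1)) * indicator {0..} u)) X"
    if "X \<in> range lessThan" for X
  proof -
    from that obtain x where X: "X = {..<x}" by auto
    have "emeasure (density lborel (\<lambda>u. ennreal (cV * u powr (real CARD('n) - 1)) * indicator {0..} u)) {..<x}
       = (\<integral>\<^sup>+ u. ennreal (cV * u powr (real CARD('n) - 1)) * indicator {0..} u * indicator {..<x} u \<partial>lborel)"
      by (subst emeasure_density) auto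
    also have "\<dots> = (\<integral>\<^sup>+ u. ennreal (indicator {0..max 0 x} u * (cV * u powr (real CARD('n) - 1))) \<partial>lborel)"
      by (intro nn_integral_cong_AE eventually_mono[OF eventually_conj[OF AE_lborel_singleton[of x] AE_lborel_singleton[of 0]]])
         (auto split: split_indicator)
    also have "\<dots> = ennreal (cV * ((max 0 x) powr (real CARD('n) - 1 + 1) / (real CARD('n) - 1 + 1)))"
      by (intro nn_integral_has_integral_lebesgue has_integral_mult_right has_integral_powr_from_0)
         (auto simp: cV_def)
    also have "\<dots> = ennreal (if x \<le> 0 then 0 else unit_ball_vol (real CARD('n)) * x ^ CARD('n))"
      using dpos by (auto simp: cV_def powr_realpow)
    finally show ?thesis using main X by simp
  qed
qed

lemma radial:
  fixes h :: "real \<Rightarrow> ennreal"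
  assumes h: "h \<in> borel_measurable borel"
  defines "cV \<equiv> real CARD('n) * unit_ball_vol (real CARD('n))"
  shows "(\<integral>\<^sup>+ z. h (norm z) \<partial>(lborel :: (real^'n) measure))
       = (\<integral>\<^sup>+ u. ennreal (cV * u powr (real CARD('n) - 1)) * indicator {0..} u * h u \<partial>lborel)"
proof -
  have "(\<integral>\<^sup>+ z. h (norm z) \<partial>(lborel :: (real^'n) measure))
      = integral\<^sup>N (distr (lborel :: (real^'n) measure) borel norm) h"
    using h by (subst nn_integral_distr) auto
  also have "\<dots> = integral\<^sup>N (density lborel (\<lambda>u. ennreal (cV * u powr (real CARD('n) - 1)) * indicator {0..} u)) h"
    unfolding cV_def by (subst dist_norm_eq) simp
  also have "\<dots> = (\<integral>\<^sup>+ u. ennreal (cV * u powr (real CARD('n) - 1)) * indicator {0..} u * h u \<partial>lborel)"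
    using h by (subst nn_integral_density) auto
  finally show ?thesis .
qed

lemma radial_inner:
  assumes "0 < \<rho>" "\<alpha> < 2"
  defines "cV \<equiv> real CARD('n) * unit_ball_vol (real CARD('n))"
  shows "(\<integral>\<^sup>+ z. ennreal (indicator {..\<rho>} (norm z) * norm z powr (2 - real CARD('n) - \<alpha>)) \<partial>(lborel :: (real^'n) measure))
       = ennreal (cV * (\<rho> powr (2 - \<alpha>) / (2 - \<alpha>)))"
proof -
  have "(\<integral>\<^sup>+ z. ennreal (indicator {..\<rho>} (norm z) * norm z powr (2 - real CARD('n) - \<alpha>)) \<partial>(lborel :: (real^'n) measure))
     = (\<integral>\<^sup>+ u. ennreal (cV * u powr (real CARD('n) - 1)) * indicator {0..} u * ennreal (indicator {..\<rho>} u * u powr (2 - real CARD('n) - \<alpha>)) \<partial>lborel)"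
    unfolding cV_def by (rule radial) measurable
  also have "\<dots> = (\<integral>\<^sup>+ u. ennreal (indicator {0..\<rho>} u * (cV * u powr (1 - \<alpha> ))) \<partial>lborel)"
  proof (intro nn_integral_cong)
    fix u :: real
    show "ennreal (cV * u powr (real CARD('n) - 1)) * indicator {0..} u * ennreal (indicator {..\<rho>} u * u powr (2 - real CARD('n) - \<alpha>))
        = ennreal (indicator {0..\<rho>} u * (cV * u powr (1 - \<alpha>)))"
    proof (cases "u > 0")
      case True
      have "u powr (real CARD('n) - 1) * u powr (2 - real CARD('n) - \<alpha>) = u powr (1 - \<alpha>)"
        using True by (simp add: powr_add[symmetric])
      then show ?thesis using True
        by (auto split: split_indicator simp: ennreal_mult'[symmetric] mult_ac cV_def)
    next
      case False
      then show ?thesis by (cases "u = 0") (auto split: split_indicator)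
    qed
  qed
  also have "\<dots> = ennreal (cV * (\<rho> powr (1 - \<alpha> + 1) / (1 - \<alpha> + 1)))"
    using assms by (intro nn_integral_has_integral_lebesgue has_integral_mult_right has_integral_powr_from_0)
         (auto simp: cV_def)
  finally show ?thesis by simp
qed

lemma radial_outer:
  assumes "0 < \<rho>" "p < \<alpha>"
  defines "cV \<equiv> real CARD('n) * unit_ball_vol (real CARD('n))"
  shows "(\<integral>\<^sup>+ z. ennreal (indicator {\<rho>..} (norm z) * norm z powr (p - real CARD('n) - \<alpha>)) \<partial>(lborel :: (real^'n) measure))
       = ennreal (cV * (\<rho> powr (p - \<alpha>) / (\<alpha> - p)))"
proof -
  have "(\<integral>\<^sup>+ z. ennreal (indicator {\<rho>..} (norm z) * norm z powr (p - real CARD('n) - \<alpha>)) \<partial>(lborel :: (real^'n) measure))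
     = (\<integral>\<^sup>+ u. ennreal (cV * u powr (real CARD('n) - 1)) * indicator {0..} u * ennreal (indicator {\<rho>..} u * u powr (p - real CARD('n) - \<alpha>)) \<partial>lborel)"
    unfolding cV_def by (rule radial) measurable
  also have "\<dots> = (\<integral>\<^sup>+ u. ennreal (indicator {\<rho>..} u * (cV * u powr (p - \<alpha> - 1))) \<partial>lborel)"
  proof (intro nn_integral_cong)
    fix u :: real
    show "ennreal (cV * u powr (real CARD('n) - 1)) * indicator {0..} u * ennreal (indicator {\<rho>..} u * u powr (p - real CARD('n) - \<alpha>))
        = ennreal (indicator {\<rho>..} u * (cV * u powr (p - \<alpha> - 1)))"
    proof (cases "u \<ge> \<rho>")
      case True
      then have "u > 0" using assms by linarith
      then have "u powr (real CARD('n) - 1) * u powr (p - real CARD('n) - \<alpha>) = u powr (p - \<alpha> - 1)"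
        by (simp add: powr_add[symmetric])
      then show ?thesis using True \<open>u > 0\<close>
        by (auto split: split_indicator simp: ennreal_mult'[symmetric] mult_ac cV_def)
    next
      case False
      then show ?thesis by (auto split: split_indicator)
    qed
  qed
  also have "\<dots> = ennreal (cV * (- (\<rho> powr (p - \<alpha> - 1 + 1)) / (p - \<alpha> - 1 + 1)))"
    using assms by (intro nn_integral_has_integral_lebesgue has_integral_mult_right has_integral_powr_to_inf)
         (auto simp: cV_def)
  also have "\<dots> = ennreal (cV * (\<rho> powr (p - \<alpha>) / (\<alpha> - p)))"
  proof (intro arg_cong[where f=ennreal])
    have "- (\<rho> powr (p - \<alpha>)) / (p - \<alpha>) = \<rho> powr (p - \<alpha>) / (\<alpha> - p)"
      by (metis minus_diff_eq divide_minus_right divide_minus_left minus_minus)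
    then show "cV * (- (\<rho> powr (p - \<alpha> - 1 + 1)) / (p - \<alpha> - 1 + 1)) = cV * (\<rho> powr (p - \<alpha>) / (\<alpha> - p))"
      by simp
  qed
  finally show ?thesis .
qed



lemma conc:
  fixes a u v :: real
  assumes "0 \<le> a" "a \<le> 1" "0 < u" "0 < v"
  shows "v powr a \<le> u powr a + a * u powr (a - 1) * (v - u)"
proof -
  have "(v/u) powr a * 1 powr (1 - a) \<le> a * (v/u) + (1 - a) * 1"
    using assms by (intro Youngs_inequality_0) auto
  then have "(v/u) powr a \<le> a * (v/u) + (1 - a)" by simp
  then have "u powr a * (v/u) powr a \<le> u powr a * (a * (v/u) + (1 - a))"
    using assms by (intro mult_left_mono) auto
  also have "u powr a * (v/u) powr a = v powr a"
    using assms by (simp add: powr_divide)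
  also have "u powr a * (a * (v/u) + (1 - a)) = u powr a + a * u powr (a - 1) * (v - u)"
  proof -
    have "u powr a = u powr (a - 1) * u" using assms by (simp add: powr_diff)
    then show ?thesis using assms by (simp add: field_simps)
  qed
  finally show ?thesis .
qed

lemma D1:
  fixes x w :: "real^'n"
  assumes "0 \<le> p" "p \<le> 2"
  shows "Vp p (x + w) + Vp p (x - w) - 2 * Vp p x \<le> p * (1 + (norm x)\<^sup>2) powr (p/2 - 1) * (norm w)\<^sup>2"
proof -
  define u where "u = 1 + (norm x)\<^sup>2"
  have u: "u > 0" unfolding u_def by (simp add: add_pos_nonneg)
  have e1: "(norm (x + w))\<^sup>2 = (norm x)\<^sup>2 + 2 * (x \<bullet> w) + (norm w)\<^sup>2"
    by (simp add: power2_norm_eq_inner inner_add inner_commute)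
  have e2: "(norm (x - w))\<^sup>2 = (norm x)\<^sup>2 - 2 * (x \<bullet> w) + (norm w)\<^sup>2"
    by (simp add: power2_norm_eq_inner inner_diff inner_commute)
  define K where "K = p/2 * u powr (p/2 - 1)"
  define A where "A = (1 + (norm (x + w))\<^sup>2) - u"
  define B where "B = (1 + (norm (x - w))\<^sup>2) - u"
  have 1: "Vp p (x + w) \<le> u powr (p/2) + K * A"
    unfolding Vp_def K_def A_def using assms u by (intro conc) (auto simp: add_pos_nonneg)
  have 2: "Vp p (x - w) \<le> u powr (p/2) + K * B"
    unfolding Vp_def K_def B_def using assms u by (intro conc) (auto simp: add_pos_nonneg)
  have AB: "A + B = 2 * (norm w)\<^sup>2"
    unfolding A_def B_def u_def e1 e2 by simp
  have "Vp p (x + w) + Vp p (x - w) - 2 * Vp p x \<le> K * A + K * B"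
    using 1 2 unfolding Vp_def u_def by simp
  also have "K * A + K * B = p * (1 + (norm x)\<^sup>2) powr (p/2 - 1) * (norm w)\<^sup>2"
    unfolding distrib_left[symmetric] AB K_def u_def by simp
  finally show ?thesis .
qed

lemma D2:
  fixes x y :: "real^'n"
  assumes "0 \<le> p" "norm y \<le> norm x + m" "1 + (norm x)\<^sup>2 \<le> m\<^sup>2" "0 \<le> m"
  shows "Vp p y \<le> 2 powr p * m powr p"
proof -
  have "(norm y)\<^sup>2 \<le> (norm x + m)\<^sup>2"
    using assms by (intro power_mono) auto
  also have "\<dots> \<le> 2 * (norm x)\<^sup>2 + 2 * m\<^sup>2"
  proof -
    have "0 \<le> (norm x - m)\<^sup>2" by simp
    then show ?thesis unfolding power2_sum power2_diff by linarith
  qed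
  finally have le: "1 + (norm y)\<^sup>2 \<le> (2 * m)\<^sup>2" using assms by (simp add: power_mult_distrib)
  have m: "m > 0"
  proof (rule ccontr)
    assume "\<not> m > 0"
    then have "m = 0" using assms by linarith
    then have "m\<^sup>2 = 0" by simp
    moreover have "(norm x)\<^sup>2 \<ge> 0" by simp
    ultimately show False using assms(3) by linarith
  qed
  have "Vp p y \<le> ((2 * m)\<^sup>2) powr (p/2)"
    unfolding Vp_def using le assms by (intro powr_mono2) (auto simp: add_pos_nonneg)
  also have "((2 * m)\<^sup>2) powr (p/2) = (2 * m) powr p"
  proof -
    have "(2 * m) powr 2 = (2 * m)\<^sup>2" using m by (simp add: powr_numeral)
    moreover have "((2 * m) powr 2) powr (p/2) = (2 * m) powr p" by (simp add: powr_powr)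
    ultimately show ?thesis by simp
  qed
  also have "\<dots> = 2 powr p * m powr p"
    using m by (simp add: powr_mult)
  finally show ?thesis .
qed



lemma int_le_nn:
  fixes f :: "'a \<Rightarrow> real"
  shows "integral\<^sup>L M f \<le> enn2real (\<integral>\<^sup>+ x. ennreal (f x) \<partial>M)"
proof (cases "integrable M f")
  case True
  have "integral\<^sup>L M f \<le> integral\<^sup>L M (\<lambda>x. max 0 (f x))"
    using True by (intro integral_mono) auto
  also have "\<dots> = enn2real (\<integral>\<^sup>+ x. ennreal (max 0 (f x)) \<partial>M)"
    using True by (intro integral_eq_nn_integral) auto
  also have "(\<integral>\<^sup>+ x. ennreal (max 0 (f x)) \<partial>M) = (\<integral>\<^sup>+ x. ennreal (f x) \<partial>M)"
    by (intro nn_integral_cong) (simp add: max_def ennreal_neg)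
  finally show ?thesis .
next
  case False
  then show ?thesis by (simp add: not_integrable_integral_eq)
qed



lemma Vp_nonneg: "Vp p y \<ge> 0" by (simp add: Vp_def)

lemma L_bound:
  fixes \<sigma> :: "real^'n \<Rightarrow> real^'n^'n" and x :: "real^'n"
  assumes a: "0 < \<alpha>" "\<alpha> < 2" "0 < p" "p < \<alpha>"
  defines "s \<equiv> onorm (\<lambda>v. \<sigma> x *v v)" and "t \<equiv> 1 + (norm x)\<^sup>2"
    and "cV \<equiv> real CARD('n) * unit_ball_vol (real CARD('n))"
  shows "L_sigma \<alpha> \<sigma> (Vp p) x \<le> stable_const \<alpha> CARD('n) * cV * (p/(2-\<alpha>) + 2 powr (p+1)/(\<alpha>-p)) * s powr \<alpha> * t powr ((p-\<alpha>)/2)"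
proof -
  define d where "d = real CARD('n)"
  define F where "F z = (Vp p (x + \<sigma> x *v z) + Vp p (x - \<sigma> x *v z) - 2 * Vp p x) / norm z powr (d + \<alpha>)" for z :: "real^'n"
  have sc: "stable_const \<alpha> CARD('n) \<ge> 0"
    unfolding stable_const_def using a
    by (intro divide_nonneg_pos mult_nonneg_nonneg mult_pos_pos Gamma_real_pos) auto
  have t: "t \<ge> 1" unfolding t_def by simp
  have s0: "s \<ge> 0" unfolding s_def by (intro onorm_pos_le) simp
  have sw: "norm (\<sigma> x *v z) \<le> s * norm z" for z
    unfolding s_def using onorm[of "\<lambda>v. \<sigma> x *v v" z] by simp
  have L: "L_sigma \<alpha> \<sigma> (Vp p) x = stable_const \<alpha> CARD('n) * integral\<^sup>L lborel F"
    unfolding L_sigma_def F_def d_def by simp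
  show ?thesis
  proof (cases "s = 0")
    case True
    then have "F z = 0" for z using sw[of z] unfolding F_def by simp
    then have "F = (\<lambda>z. 0)" by (intro ext) simp
    then have "integral\<^sup>L lborel F = 0" by simp
    then show ?thesis using L True a by simp
  next
    case False
    then have s: "s > 0" using s0 by simp
    define \<rho> where "\<rho> = sqrt t / s"
    have \<rho>: "\<rho> > 0" unfolding \<rho>_def using s t by simp
    define C1 where "C1 = p * t powr (p/2 - 1) * s\<^sup>2"
    define C2 where "C2 = 2 powr (p+1) * s powr p"
    have C1: "C1 \<ge> 0" unfolding C1_def using a by simp
    have C2: "C2 \<ge> 0" unfolding C2_def by simp
    define G where "G z = C1 * (indicator {..\<rho>} (norm z) * norm z powr (2 - d - \<alpha>))
       + C2 * (indicator {\<rho>..} (norm z) * norm z powr (p - d - \<alpha>))" for z :: "real^'n"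
    have g1: "0 \<le> indicator {..\<rho>} (norm z) * norm z powr (2 - d - \<alpha>)" for z :: "real^'n" by simp
    have g2: "0 \<le> indicator {\<rho>..} (norm z) * norm z powr (p - d - \<alpha>)" for z :: "real^'n" by simp
    have Gnn: "0 \<le> G z" for z unfolding G_def using C1 C2 g1 g2 by simp
    have FG: "F z \<le> G z" for z
    proof (cases "z = 0")
      case True
      then show ?thesis using Gnn[of z] unfolding F_def by simp
    next
      case False
      define w where "w = \<sigma> x *v z"
      define N where "N = norm z powr (d + \<alpha>)"
      have nz: "norm z > 0" using False by simp
      have N: "N > 0" unfolding N_def using False by simp
      have nw: "norm w \<le> s * norm z" unfolding w_def by (rule sw)
      have Fz: "F z = (Vp p (x + w) + Vp p (x - w) - 2 * Vp p x) / N"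
        unfolding F_def w_def N_def by simp
      show ?thesis
      proof (cases "norm z \<le> \<rho>")
        case True
        have "Vp p (x + w) + Vp p (x - w) - 2 * Vp p x \<le> p * t powr (p/2 - 1) * (norm w)\<^sup>2"
          unfolding t_def using a by (intro D1) auto
        also have "\<dots> \<le> p * t powr (p/2 - 1) * (s * norm z)\<^sup>2"
          using a nw by (intro mult_left_mono power_mono) auto
        also have "\<dots> = C1 * norm z powr 2"
          unfolding C1_def using nz by (simp add: powr_numeral power_mult_distrib)
        finally have "F z \<le> C1 * norm z powr 2 / N"
          unfolding Fz using N by (simp add: divide_right_mono)
        also have "C1 * norm z powr 2 / N = C1 * norm z powr (2 - d - \<alpha>)"
          unfolding N_def by (simp add: powr_diff diff_diff_eq)
        also have "\<dots> \<le> G z"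
          unfolding G_def using True C2 g2 by simp
        finally show ?thesis .
      next
        case False
        define m where "m = s * norm z"
        have m0: "m \<ge> 0" unfolding m_def using s by simp
        have "sqrt t / s < norm z" using False unfolding \<rho>_def by simp
        then have "sqrt t < norm z * s" using s by (simp add: divide_less_eq)
        then have "sqrt t \<le> m" unfolding m_def by (simp add: mult.commute)
        then have "(sqrt t)\<^sup>2 \<le> m\<^sup>2" using t by (intro power_mono) auto
        then have tm: "1 + (norm x)\<^sup>2 \<le> m\<^sup>2" using t unfolding t_def by simp
        have "Vp p (x + w) \<le> 2 powr p * m powr p"
          using a nw tm m0 norm_triangle_ineq[of x w] unfolding m_def by (intro D2[of p _ x]) auto
        moreover have "Vp p (x - w) \<le> 2 powr p * m powr p"
          using a nw tm m0 norm_triangle_ineq4[of x w] unfolding m_def by (intro D2[of p _ x]) auto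
        moreover have "Vp p x \<ge> 0" by (rule Vp_nonneg)
        ultimately have "Vp p (x + w) + Vp p (x - w) - 2 * Vp p x \<le> 2 * (2 powr p * m powr p)" by linarith
        also have "\<dots> = C2 * norm z powr p"
          unfolding C2_def m_def using s nz by (simp add: powr_mult powr_add)
        finally have "F z \<le> C2 * norm z powr p / N"
          unfolding Fz using N by (simp add: divide_right_mono)
        also have "C2 * norm z powr p / N = C2 * norm z powr (p - d - \<alpha>)"
          unfolding N_def by (simp add: powr_diff diff_diff_eq)
        also have "\<dots> \<le> G z"
          unfolding G_def using False C1 g1 by simp
        finally show ?thesis .
      qed
    qed
    have GI: "(\<integral>\<^sup>+ z. ennreal (G z) \<partial>lborel) = ennreal (C1 * (cV * (\<rho> powr (2 - \<alpha>) / (2 - \<alpha>))) + C2 * (cV * (\<rho> powr (p - \<alpha>) / (\<alpha> - p))))"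
    proof -
      have "(\<integral>\<^sup>+ z. ennreal (G z) \<partial>lborel) = (\<integral>\<^sup>+ z. ennreal C1 * ennreal (indicator {..\<rho>} (norm z) * norm z powr (2 - d - \<alpha>))
           + ennreal C2 * ennreal (indicator {\<rho>..} (norm z) * norm z powr (p - d - \<alpha>)) \<partial>(lborel :: (real^'n) measure))"
        unfolding G_def using C1 C2 g1 g2
        by (intro nn_integral_cong) (simp add: ennreal_plus[symmetric] ennreal_mult[symmetric] del: ennreal_plus)
      also have "\<dots> = ennreal C1 * (\<integral>\<^sup>+ z. ennreal (indicator {..\<rho>} (norm z) * norm z powr (2 - d - \<alpha>)) \<partial>(lborel :: (real^'n) measure))
           + ennreal C2 * (\<integral>\<^sup>+ z. ennreal (indicator {\<rho>..} (norm z) * norm z powr (p - d - \<alpha>)) \<partial>(lborel :: (real^'n) measure))"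
        by (subst nn_integral_add) (auto simp: nn_integral_cmult)
      also have "\<dots> = ennreal C1 * ennreal (cV * (\<rho> powr (2 - \<alpha>) / (2 - \<alpha>))) + ennreal C2 * ennreal (cV * (\<rho> powr (p - \<alpha>) / (\<alpha> - p)))"
        unfolding d_def cV_def using \<rho> a by (simp add: radial_inner radial_outer)
      also have "\<dots> = ennreal (C1 * (cV * (\<rho> powr (2 - \<alpha>) / (2 - \<alpha>))) + C2 * (cV * (\<rho> powr (p - \<alpha>) / (\<alpha> - p))))"
        using C1 C2 \<rho> a
        by (simp add: ennreal_plus[symmetric] ennreal_mult[symmetric] cV_def del: ennreal_plus)
      finally show ?thesis .
    qed
    have m1: "(\<integral>\<^sup>+ z. ennreal (F z) \<partial>lborel) \<le> (\<integral>\<^sup>+ z. ennreal (G z) \<partial>lborel)"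
      by (intro nn_integral_mono ennreal_leI FG)
    have m2: "(\<integral>\<^sup>+ z. ennreal (G z) \<partial>lborel) < top" unfolding GI by simp
    have "integral\<^sup>L lborel F \<le> enn2real (\<integral>\<^sup>+ z. ennreal (F z) \<partial>lborel)"
      by (rule int_le_nn)
    also have "\<dots> \<le> enn2real (\<integral>\<^sup>+ z. ennreal (G z) \<partial>lborel)"
      by (rule enn2real_mono[OF m1 m2])
    also have "(\<integral>\<^sup>+ z. ennreal (G z) \<partial>lborel) = ennreal (C1 * (cV * (\<rho> powr (2 - \<alpha>) / (2 - \<alpha>))) + C2 * (cV * (\<rho> powr (p - \<alpha>) / (\<alpha> - p))))"
      by (rule GI)
    also have "enn2real \<dots> = C1 * (cV * (\<rho> powr (2 - \<alpha>) / (2 - \<alpha>))) + C2 * (cV * (\<rho> powr (p - \<alpha>) / (\<alpha> - p)))"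
      using C1 C2 \<rho> a by (intro enn2real_ennreal add_nonneg_nonneg mult_nonneg_nonneg divide_nonneg_pos) (auto simp: cV_def)
    also have "\<dots> = cV * (p/(2-\<alpha>) + 2 powr (p+1)/(\<alpha>-p)) * s powr \<alpha> * t powr ((p-\<alpha>)/2)"
    proof -
      have rp: "\<rho> powr e = t powr (e/2) / s powr e" for e
      proof -
        have "\<rho> powr e = sqrt t powr e / s powr e" unfolding \<rho>_def using s t by (simp add: powr_divide)
        also have "sqrt t = t powr (1/2)" using t by (simp add: powr_half_sqrt)
        also have "(t powr (1/2)) powr e = t powr (e/2)" by (simp add: powr_powr)
        finally show ?thesis .
      qed
      have tt: "t powr (p/2 - 1) * t powr ((2 - \<alpha>)/2) = t powr ((p - \<alpha>)/2)"
      proof -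
        have "p/2 - 1 + (2 - \<alpha>)/2 = (p - \<alpha>)/2" by (simp add: field_simps)
        then show ?thesis by (metis powr_add)
      qed
      have ss: "s\<^sup>2 / s powr (2 - \<alpha>) = s powr \<alpha>"
      proof -
        have "s\<^sup>2 = s powr 2" using s by (simp add: powr_numeral)
        moreover have "s powr 2 / s powr (2 - \<alpha>) = s powr (2 - (2 - \<alpha>))" by (rule powr_diff[symmetric])
        ultimately show ?thesis by simp
      qed
      have ss2: "s powr p / s powr (p - \<alpha>) = s powr \<alpha>"
      proof -
        have "s powr p / s powr (p - \<alpha>) = s powr (p - (p - \<alpha>))" by (rule powr_diff[symmetric])
        then show ?thesis by simp
      qed
      have R1: "C1 * \<rho> powr (2 - \<alpha>) = p * s powr \<alpha> * t powr ((p - \<alpha>)/2)"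
      proof -
        have "C1 * \<rho> powr (2 - \<alpha>) = p * (t powr (p/2 - 1) * t powr ((2 - \<alpha>)/2)) * (s\<^sup>2 / s powr (2 - \<alpha>))"
          unfolding C1_def rp by simp
        then show ?thesis unfolding tt ss by simp
      qed
      have R2: "C2 * \<rho> powr (p - \<alpha>) = 2 powr (p+1) * s powr \<alpha> * t powr ((p - \<alpha>)/2)"
      proof -
        have "C2 * \<rho> powr (p - \<alpha>) = 2 powr (p+1) * t powr ((p - \<alpha>)/2) * (s powr p / s powr (p - \<alpha>))"
          unfolding C2_def rp by simp
        then show ?thesis unfolding ss2 by simp
      qed
      have "C1 * (cV * (\<rho> powr (2 - \<alpha>) / (2 - \<alpha>))) + C2 * (cV * (\<rho> powr (p - \<alpha>) / (\<alpha> - p)))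
          = cV * ((C1 * \<rho> powr (2 - \<alpha>)) / (2 - \<alpha>) + (C2 * \<rho> powr (p - \<alpha>)) / (\<alpha> - p))"
        by (simp add: algebra_simps)
      also have "\<dots> = cV * (p/(2-\<alpha>) + 2 powr (p+1)/(\<alpha>-p)) * s powr \<alpha> * t powr ((p-\<alpha>)/2)"
        unfolding R1 R2 by (simp add: algebra_simps add_divide_distrib)
      finally show ?thesis .
    qed
    finally show ?thesis unfolding L using sc by (simp add: mult_left_mono mult.assoc)
  qed
qed



lemma Vp_deriv:
  fixes x :: "real^'n"
  shows "(Vp p has_derivative (\<lambda>h. p * (1 + (norm x)\<^sup>2) powr (p/2 - 1) * (x \<bullet> h))) (at x)"
proof -
  have eq: "Vp p = (\<lambda>y. (1 + y \<bullet> y) powr (p/2))"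
    by (intro ext) (simp add: Vp_def power2_norm_eq_inner)
  have pos: "0 < 1 + x \<bullet> x" by (simp add: add_pos_nonneg)
  have "((\<lambda>y. (1 + y \<bullet> y) powr (p/2)) has_derivative
      (\<lambda>h. (1 + x \<bullet> x) powr (p/2) * ((\<lambda>h. 0) h * ln (1 + x \<bullet> x) + (x \<bullet> h + h \<bullet> x) * (p/2) / (1 + x \<bullet> x)))) (at x)"
  proof -
    have d0: "((\<lambda>y. y \<bullet> y) has_derivative (\<lambda>h. x \<bullet> h + h \<bullet> x)) (at x)"
      by (rule has_derivative_inner[OF has_derivative_ident has_derivative_ident])
    have d1: "((\<lambda>y. 1 + y \<bullet> y) has_derivative (\<lambda>h. 0 + (x \<bullet> h + h \<bullet> x))) (at x)"
      by (rule has_derivative_add[OF has_derivative_const d0])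
    show ?thesis
      using has_derivative_powr[OF d1 has_derivative_const[of "p/2"] pos] by simp
  qed
  moreover have "(\<lambda>h. (1 + x \<bullet> x) powr (p/2) * ((\<lambda>h. 0) h * ln (1 + x \<bullet> x) + (x \<bullet> h + h \<bullet> x) * (p/2) / (1 + x \<bullet> x)))
      = (\<lambda>h. p * (1 + (norm x)\<^sup>2) powr (p/2 - 1) * (x \<bullet> h))"
  proof (intro ext)
    fix h
    have "(1 + x \<bullet> x) powr (p/2) / (1 + x \<bullet> x) = (1 + x \<bullet> x) powr (p/2 - 1)"
      using pos by (simp add: powr_diff)
    then show "(1 + x \<bullet> x) powr (p/2) * ((\<lambda>h. 0) h * ln (1 + x \<bullet> x) + (x \<bullet> h + h \<bullet> x) * (p/2) / (1 + x \<bullet> x))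
      = p * (1 + (norm x)\<^sup>2) powr (p/2 - 1) * (x \<bullet> h)"
      unfolding power2_norm_eq_inner \<open>_ = (1 + x \<bullet> x) powr (p/2 - 1)\<close>[symmetric]
      using pos by (simp add: inner_commute[of h x] field_simps)
  qed
  ultimately show ?thesis unfolding eq by simp
qed

lemma const_ineq:
  fixes d :: nat
  assumes a: "0 < \<alpha>" "\<alpha> < 2" "0 < p" "p < \<alpha>" "d > 0"
  shows "stable_const \<alpha> d * (real d * unit_ball_vol (real d)) * (p/(2-\<alpha>) + 2 powr (p+1)/(\<alpha>-p))
       \<le> p * q_const \<alpha> d p * 2 powr ((\<alpha> - 2)/2)"
proof -
  define P where "P = pi powr (real d / 2)"
  define G1 where "G1 = Gamma ((real d + \<alpha>) / 2)"
  define G2 where "G2 = Gamma (real d / 2)"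
  define G3 where "G3 = Gamma ((2 - \<alpha>) / 2)"
  have P: "P > 0" unfolding P_def by simp
  have G1: "G1 > 0" unfolding G1_def using a by (intro Gamma_real_pos) auto
  have G2: "G2 > 0" unfolding G2_def using a by (intro Gamma_real_pos) auto
  have G3: "G3 > 0" unfolding G3_def using a by (intro Gamma_real_pos) auto
  define K where "K = P * G1 / (G2\<^sup>2 * G3)"
  have K: "K > 0" unfolding K_def using P G1 G2 G3 by simp
  have Gp: "Gamma (real d / 2 + 1) = (real d / 2) * G2"
    unfolding G2_def using a by (intro Gamma_plus1) (auto dest: nonpos_Ints_nonpos)
  have cV: "real d * unit_ball_vol (real d) = 2 * P / G2"
    unfolding unit_ball_vol_def Gp P_def using a G2 by (simp add: field_simps)
  have sc: "stable_const \<alpha> d = \<alpha> * 2 powr \<alpha> * G1 / (G2 * G3)"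
    unfolding stable_const_def G1_def G2_def G3_def by simp
  define X where "X = p / (2 - \<alpha>)"
  define Y where "Y = 1 / (\<alpha> - p)"
  have X: "X > 0" unfolding X_def using a by simp
  have Y: "Y > 0" unfolding Y_def using a by simp
  have q: "q_const \<alpha> d p = 2 powr (4 + 2 * \<alpha>) * K * (\<alpha> / p) * (X + Y)"
    unfolding q_const_def K_def X_def Y_def P_def G1_def G2_def G3_def using a
    by (simp add: field_simps)
  define E where "E = 2 powr (3 + 5 * \<alpha> / 2)"
  have E: "2 powr (4 + 2 * \<alpha>) * 2 powr ((\<alpha> - 2)/2) = E"
    unfolding E_def by (simp add: powr_add[symmetric] field_simps)
  have LHS: "stable_const \<alpha> d * (real d * unit_ball_vol (real d)) * (p/(2-\<alpha>) + 2 powr (p+1)/(\<alpha>-p))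
       = (2 * \<alpha> * K) * (2 powr \<alpha> * X + 2 powr (\<alpha> + p + 1) * Y)"
    unfolding sc cV K_def X_def Y_def using a G2 G3
    by (simp add: field_simps power2_eq_square powr_add)
  have RHS: "p * q_const \<alpha> d p * 2 powr ((\<alpha> - 2)/2) = (2 * \<alpha> * K) * (E / 2 * X + E / 2 * Y)"
    unfolding q E[symmetric] using a by (simp add: field_simps)
  have e1: "2 powr \<alpha> \<le> E / 2"
  proof -
    have "2 powr (3 + 5 * \<alpha> / 2 - 1) = 2 powr (3 + 5 * \<alpha> / 2) / 2 powr 1" by (rule powr_diff)
    then have "E / 2 = 2 powr (3 + 5 * \<alpha> / 2 - 1)" unfolding E_def by simp
    moreover have "2 powr \<alpha> \<le> 2 powr (3 + 5 * \<alpha> / 2 - 1)" using a by (intro powr_mono) auto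
    ultimately show ?thesis by simp
  qed
  have e2: "2 powr (\<alpha> + p + 1) \<le> E / 2"
  proof -
    have "2 powr (3 + 5 * \<alpha> / 2 - 1) = 2 powr (3 + 5 * \<alpha> / 2) / 2 powr 1" by (rule powr_diff)
    then have "E / 2 = 2 powr (3 + 5 * \<alpha> / 2 - 1)" unfolding E_def by simp
    moreover have "2 powr (\<alpha> + p + 1) \<le> 2 powr (3 + 5 * \<alpha> / 2 - 1)" using a by (intro powr_mono) auto
    ultimately show ?thesis by simp
  qed
  have "2 powr \<alpha> * X + 2 powr (\<alpha> + p + 1) * Y \<le> E / 2 * X + E / 2 * Y"
    using e1 e2 X Y by (intro add_mono mult_right_mono) auto
  then show ?thesis unfolding LHS RHS using a K by (intro mult_left_mono) auto
qed



theorem lemma3p1: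
  fixes \<alpha> r p c0 c1 :: real
    and b :: "real ^ 'n \<Rightarrow> real ^ 'n"
    and \<sigma> :: "real ^ 'n \<Rightarrow> real ^ 'n ^ 'n"
  assumes "0 < \<alpha>" "\<alpha> < 2"
    and "r > - \<alpha>"
    and "max (- r) 0 < p" "p < \<alpha>"
    and "locally_bounded b" "locally_bounded \<sigma>"
    and "c0 > 0" "c1 > 0"
    and "\<forall>x :: real ^ 'n. norm x > 1 \<longrightarrow>
           q_const \<alpha> CARD('n) p * onorm (\<lambda>v. \<sigma> x *v v) powr \<alpha> * norm x powr (2 - \<alpha>) + x \<bullet> b x
             \<le> - c0 * norm x powr (2 + r) + c1"
  shows "\<exists>\<kappa>0 \<kappa>1 :: real. \<kappa>0 > 0 \<and> \<kappa>1 > 0 \<and>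
           (\<forall>x :: real ^ 'n. gen_L \<alpha> \<sigma> b (Vp p) x \<le> - \<kappa>0 * Vp p x powr (1 + r / p) + \<kappa>1)"
proof -
  note a = assms(1,2,5)
  have p: "p > 0" "p + r > 0" using assms(4) by auto
  have r2: "2 + r > 0" using assms(1-3) by linarith
  define d where "d = CARD('n)"
  have d: "d > 0" unfolding d_def by simp
  define A where "A = stable_const \<alpha> CARD('n) * (real CARD('n) * unit_ball_vol (real CARD('n))) * (p/(2-\<alpha>) + 2 powr (p+1)/(\<alpha>-p))"
  define q where "q = q_const \<alpha> CARD('n) p"
  have Aq: "A \<le> p * q * 2 powr ((\<alpha> - 2)/2)"
    unfolding A_def q_def using const_ineq[of \<alpha> p "CARD('n)"] a p by simp
  have A0: "A \<ge> 0"
    unfolding A_def stable_const_def using a p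
    by (intro mult_nonneg_nonneg divide_nonneg_pos add_nonneg_nonneg Gamma_real_pos) auto
  have "0 \<le> (p * 2 powr ((\<alpha> - 2)/2)) * q" using Aq A0 by (simp add: ac_simps)
  moreover have pc: "0 < p * 2 powr ((\<alpha> - 2)/2)" using p by simp
  ultimately have q0: "q \<ge> 0" by (auto simp: zero_le_mult_iff)
  have "bounded (b ` cball 0 1)" using assms(6) unfolding locally_bounded_def by simp
  then obtain B where B0: "\<forall>z\<in>b ` cball 0 1. norm z \<le> B" unfolding bounded_iff by blast
  have B: "\<And>y. y \<in> cball 0 1 \<Longrightarrow> norm (b y) \<le> B" using B0 by blast
  have "bounded (\<sigma> ` cball 0 1)" using assms(7) unfolding locally_bounded_def by simp
  then obtain M where M0: "\<forall>z\<in>\<sigma> ` cball 0 1. norm z \<le> M" unfolding bounded_iff by blast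
  have M: "\<And>y. y \<in> cball 0 1 \<Longrightarrow> norm (\<sigma> y) \<le> M" using M0 by blast
  define S where "S = real CARD('n) * real CARD('n) * max M 0"
  have S0: "S \<ge> 0" unfolding S_def by simp
  have sS: "onorm (\<lambda>v. \<sigma> y *v v) \<le> S" if "y \<in> cball 0 1" for y
  proof -
    have "\<bar>\<sigma> y $ i $ j\<bar> \<le> max M 0" for i j
      using component_le_norm_cart[of "\<sigma> y $ i" j] Finite_Cartesian_Product.norm_nth_le[of "\<sigma> y" i] M[OF that] by linarith
    then show ?thesis unfolding S_def by (rule onorm_le_matrix_component)
  qed
  define \<kappa>0 where "\<kappa>0 = p * c0 * 2 powr (-(2 + r)/2)"
  define \<kappa>1 where "\<kappa>1 = p * c1 + A * S powr \<alpha> + p * \<bar>B\<bar> + \<kappa>0 * 2 powr ((p + r)/2)"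
  have k0: "\<kappa>0 > 0" unfolding \<kappa>0_def using p assms(8) by simp
  have k1: "\<kappa>1 > 0" unfolding \<kappa>1_def using p assms(9) A0 k0
    by (intro add_pos_nonneg mult_nonneg_nonneg) auto
  have main: "gen_L \<alpha> \<sigma> b (Vp p) x \<le> - \<kappa>0 * Vp p x powr (1 + r / p) + \<kappa>1" for x :: "real^'n"
  proof -
    define t where "t = 1 + (norm x)\<^sup>2"
    define s where "s = onorm (\<lambda>v. \<sigma> x *v v)"
    have t: "t \<ge> 1" unfolding t_def by simp
    have s0: "s \<ge> 0" unfolding s_def by (intro onorm_pos_le) simp
    have G: "gen_L \<alpha> \<sigma> b (Vp p) x = L_sigma \<alpha> \<sigma> (Vp p) x + p * t powr (p/2 - 1) * (x \<bullet> b x)"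
      unfolding gen_L_def t_def using frechet_derivative_at[OF Vp_deriv[of p x]] by metis
    have Lb: "L_sigma \<alpha> \<sigma> (Vp p) x \<le> A * s powr \<alpha> * t powr ((p - \<alpha>)/2)"
      unfolding A_def s_def t_def using L_bound[of \<alpha> p \<sigma> x] a p by (simp add: mult.assoc)
    have V: "Vp p x powr (1 + r / p) = t powr ((p + r)/2)"
    proof -
      have "Vp p x powr (1 + r / p) = t powr (p/2 * (1 + r/p))" unfolding Vp_def t_def by (simp add: powr_powr)
      also have "p/2 * (1 + r/p) = (p + r)/2" using p by (simp add: field_simps)
      finally show ?thesis .
    qed
    have tp: "t powr (p/2 - 1) \<le> 1"
    proof -
      have "t powr (p/2 - 1) \<le> t powr 0" using t a by (intro powr_mono) auto
      then show ?thesis using t by simp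
    qed
    have tp0: "t powr (p/2 - 1) \<ge> 0" by simp
    show ?thesis
    proof (cases "norm x \<le> 1")
      case True
      then have xin: "x \<in> cball 0 1" by simp
      have "t \<le> 2" unfolding t_def using True by (simp add: abs_square_le_1)
      then have tV: "t powr ((p + r)/2) \<le> 2 powr ((p + r)/2)" using p t by (intro powr_mono2) auto
      have ta: "t powr ((p - \<alpha>)/2) \<le> 1"
      proof -
        have "t powr ((p - \<alpha>)/2) \<le> t powr 0" using t a by (intro powr_mono) auto
        then show ?thesis using t by simp
      qed
      have "s powr \<alpha> \<le> S powr \<alpha>" unfolding s_def using sS[OF xin] s0 a by (intro powr_mono2) (auto simp: s_def)
      then have "A * s powr \<alpha> * t powr ((p - \<alpha>)/2) \<le> A * S powr \<alpha>"
      proof -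
        assume sS': "s powr \<alpha> \<le> S powr \<alpha>"
        have "A * s powr \<alpha> * t powr ((p - \<alpha>)/2) \<le> A * s powr \<alpha> * 1"
          using A0 ta by (intro mult_left_mono) auto
        also have "\<dots> \<le> A * S powr \<alpha>" using A0 sS' by (simp add: mult_left_mono)
        finally show ?thesis .
      qed
      moreover have "p * t powr (p/2 - 1) * (x \<bullet> b x) \<le> p * \<bar>B\<bar>"
      proof -
        have "x \<bullet> b x \<le> norm x * norm (b x)" by (rule norm_cauchy_schwarz)
        also have "\<dots> \<le> 1 * \<bar>B\<bar>" using True B[OF xin] by (intro mult_mono) auto
        finally have xb: "x \<bullet> b x \<le> \<bar>B\<bar>" by simp
        have "t powr (p/2 - 1) * (x \<bullet> b x) \<le> \<bar>B\<bar>"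
        proof (cases "x \<bullet> b x \<ge> 0")
          case True
          then have "t powr (p/2 - 1) * (x \<bullet> b x) \<le> 1 * (x \<bullet> b x)" using tp by (intro mult_right_mono) auto
          then show ?thesis using xb by simp
        next
          case False
          then have "t powr (p/2 - 1) * (x \<bullet> b x) \<le> 0" using tp0 by (simp add: mult_nonneg_nonpos)
          then show ?thesis by simp
        qed
        then show ?thesis using p by (simp add: mult.assoc mult_left_mono)
      qed
      moreover have "\<kappa>0 * t powr ((p + r)/2) \<le> \<kappa>0 * 2 powr ((p + r)/2)" using k0 tV by simp
      moreover have "0 \<le> p * c1" using p assms(9) by simp
      ultimately show ?thesis unfolding G V \<kappa>1_def using Lb by linarith
    next
      case False
      then have x1: "norm x > 1" by simp
      have hyp: "x \<bullet> b x \<le> - c0 * norm x powr (2 + r) + c1 - q * s powr \<alpha> * norm x powr (2 - \<alpha>)"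
        using assms(10) x1 unfolding q_def s_def by force
      have "1 \<le> (norm x)\<^sup>2" using power_mono[of 1 "norm x" 2] x1 by simp
      then have nx2: "(norm x)\<^sup>2 \<ge> t / 2" unfolding t_def by simp
      have nxp: "norm x powr e \<ge> (t/2) powr (e/2)" if "e \<ge> 0" for e
      proof -
        have "(norm x)\<^sup>2 = norm x powr 2" using x1 by (simp add: powr_numeral)
        moreover have "(norm x powr 2) powr (e/2) = norm x powr e" by (subst powr_powr) simp
        ultimately have "((norm x)\<^sup>2) powr (e/2) = norm x powr e" by simp
        moreover have "(t/2) powr (e/2) \<le> ((norm x)\<^sup>2) powr (e/2)"
          using nx2 t that by (intro powr_mono2) auto
        ultimately show ?thesis by simp
      qed
      have splt: "(t/2) powr e = t powr e * 2 powr (-e)" for e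
      proof -
        have "(t/2) powr e = t powr e / 2 powr e" using t by (simp add: powr_divide)
        also have "\<dots> = t powr e * 2 powr (-e)" by (simp add: powr_minus divide_inverse)
        finally show ?thesis .
      qed
      define T1 where "T1 = t powr (p/2 - 1)"
      define T2 where "T2 = t powr ((2 - \<alpha>)/2)"
      define T3 where "T3 = t powr ((2 + r)/2)"
      define c2 where "c2 = 2 powr ((\<alpha> - 2)/2)"
      define c3 where "c3 = 2 powr (-(2 + r)/2)"
      have T12: "T1 * T2 = t powr ((p - \<alpha>)/2)"
      proof -
        have "p/2 - 1 + (2 - \<alpha>)/2 = (p - \<alpha>)/2" by (simp add: field_simps)
        then show ?thesis unfolding T1_def T2_def by (metis powr_add)
      qed
      have T13: "T1 * T3 = t powr ((p + r)/2)"
      proof -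
        have "p/2 - 1 + (2 + r)/2 = (p + r)/2" by (simp add: field_simps)
        then show ?thesis unfolding T1_def T3_def by (metis powr_add)
      qed
      have h2: "(t/2) powr ((2 - \<alpha>)/2) = T2 * c2"
      proof -
        have e: "-((2 - \<alpha>)/2) = (\<alpha> - 2)/2" by (simp add: field_simps)
        show ?thesis unfolding T2_def c2_def splt e by (rule refl)
      qed
      have h3: "(t/2) powr ((2 + r)/2) = T3 * c3"
      proof -
        have e: "-((2 + r)/2) = -(2 + r)/2" by (simp add: field_simps)
        show ?thesis unfolding T3_def c3_def splt e by (rule refl)
      qed
      have T10: "T1 \<ge> 0" unfolding T1_def by simp
      have "A * s powr \<alpha> * (T1 * T2) \<le> p * q * c2 * s powr \<alpha> * (T1 * T2)"
        using Aq T10 unfolding c2_def by (intro mult_right_mono) (auto simp: T2_def)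
      also have "\<dots> = p * q * s powr \<alpha> * (T1 * (t/2) powr ((2 - \<alpha>)/2))"
        unfolding h2 by (simp add: mult_ac)
      also have "\<dots> \<le> p * q * s powr \<alpha> * (T1 * norm x powr (2 - \<alpha>))"
        using nxp[of "2 - \<alpha>"] a p q0 T10
        by (intro mult_left_mono) (auto simp: mult_nonneg_nonneg)
      finally have "A * s powr \<alpha> * (T1 * T2) \<le> p * q * s powr \<alpha> * (T1 * norm x powr (2 - \<alpha>))" .
      then have diff: "A * s powr \<alpha> * t powr ((p - \<alpha>)/2) \<le> p * t powr (p/2 - 1) * (q * s powr \<alpha> * norm x powr (2 - \<alpha>))"
        unfolding T12[symmetric] T1_def[symmetric] by (simp add: mult_ac)
      have c0p: "\<kappa>0 * t powr ((p + r)/2) \<le> p * t powr (p/2 - 1) * (c0 * norm x powr (2 + r))"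
      proof -
        have "\<kappa>0 * (T1 * T3) = p * c0 * (T1 * (t/2) powr ((2 + r)/2))"
          unfolding h3 \<kappa>0_def c3_def by (simp add: mult_ac)
        also have "\<dots> \<le> p * c0 * (T1 * norm x powr (2 + r))"
          using nxp[of "2 + r"] r2 p assms(8) T10
          by (intro mult_left_mono) auto
        finally show ?thesis unfolding T13[symmetric] T1_def[symmetric] by (simp add: mult_ac)
      qed
      have "p * t powr (p/2 - 1) * (x \<bullet> b x) \<le> p * t powr (p/2 - 1) * (- c0 * norm x powr (2 + r) + c1 - q * s powr \<alpha> * norm x powr (2 - \<alpha>))"
        using hyp p tp0 by (intro mult_left_mono) auto
      also have "\<dots> = - (p * t powr (p/2 - 1) * (c0 * norm x powr (2 + r))) + p * t powr (p/2 - 1) * c1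
          - p * t powr (p/2 - 1) * (q * s powr \<alpha> * norm x powr (2 - \<alpha>))"
        by (simp add: algebra_simps)
      finally have drift: "p * t powr (p/2 - 1) * (x \<bullet> b x) \<le> - (p * t powr (p/2 - 1) * (c0 * norm x powr (2 + r))) + p * t powr (p/2 - 1) * c1
          - p * t powr (p/2 - 1) * (q * s powr \<alpha> * norm x powr (2 - \<alpha>))" .
      have "p * t powr (p/2 - 1) * c1 \<le> p * c1"
        using tp p assms(9) by (simp add: mult_left_mono mult_right_mono mult.assoc)
      moreover have "p * c1 \<le> \<kappa>1"
      proof -
        have "0 \<le> A * S powr \<alpha>" using A0 by simp
        moreover have "0 \<le> p * \<bar>B\<bar>" using p by simp
        moreover have "0 \<le> \<kappa>0 * 2 powr ((p + r)/2)" using k0 by simp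
        ultimately show ?thesis unfolding \<kappa>1_def by linarith
      qed
      ultimately show ?thesis unfolding G V using Lb diff drift c0p by linarith
    qed
  qed
  show ?thesis using k0 k1 main by blast
qed

end
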